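(* In the network described in the context with homogeneous all-to-all coupling $\varepsilon_{ij}=(1-\delta_{ij})\varepsilon$, $\varepsilon>0$, $(N-1)\varepsilon<1$, a neuronal partial reset function $R$ and a strictly convex rise function $U$ ($U''>0$), the asynchronous periodic (splay) state exists and is linearly stable.
   Context: Model: $N$ units with phases $\phi_i$. A rise function is a smooth $U:[0,\infty)\to[0,\infty)$ with $U'>0$, $U(0)=0$, $U(1)=1$. A partial reset function is a monotonically increasing $R:\mathbb{R}\to\mathbb{R}$ with $R(0)=0$; neuronal if $0\le R(\zeta)\le\zeta$ for $\zeta\ge0$. $H_\varepsilon(\phi)=U^{-1}(U(\phi)+\varepsilon)$, $J_\varepsilon(\phi)=U^{-1}(R(U(\phi)+\varepsilon-1))$. Dynamics: $\varepsilon_{ij}$ is the pulse strength from unit $j$ to unit $i$. Between events phases increase at unit rate. When at time $t$ the set $\Theta^{(0)}=\{j:\phi_j(t^-)=1\}$ is nonempty an avalanche occurs: with $u_i^{(0)}=U(\phi_i(t^-))$, $u_i^{(k+1)}=u_i^{(k)}+\sum_{j\in\Theta^{(k)}}\varepsilon_{ij}$, $\Theta^{(k+1)}=\{i:u_i^{(k)}<1\le u_i^{(k+1)}\}$ until empty, $\Theta=\bigcup_k\Theta^{(k)}$; then $\phi_i(t^+)=H_{\sum_{j\in\Theta}\varepsilon_{ij}}(\phi_i(t^-))$ for $i\notin\Theta$ and $\phi_i(t^+)=J_{\sum_{j\in\Theta}\varepsilon_{ij}}(\phi_i(t^-))$ for $i\in\Theta$. The return map sends the state just before a fixed reference unit fires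 to the state just before it fires next. An asynchronous periodic (splay) state is a state invariant under the return map in which every avalanche has size $1$. Linear stability means that, to first order, small phase perturbations tend to zero under iteration of the return map. *)

theory Defs
  imports "HOL-Analysis.Analysis"
begin

definition higher_derivs :: "(real \<Rightarrow> real) \<Rightarrow> (nat \<Rightarrow> real \<Rightarrow> real) \<Rightarrow> bool" where
  "higher_derivs U D \<longleftrightarrow> D 0 = U \<and>
     (\<forall>n x. x \<ge> 0 \<longrightarrow> (D n has_real_derivative D (Suc n) x) (at x within {0..}))"

definition rise_function :: "(real \<Rightarrow> real) \<Rightarrow> (nat \<Rightarrow> real \<Rightarrow> real) \<Rightarrow> bool" where
  "rise_function U D \<longleftrightarrow> higher_derivs U D \<and> (\<forall>x\<ge>0. D 1 x > 0) \<and> U 0 = 0 \<and> U 1 = 1"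

definition partial_reset :: "(real \<Rightarrow> real) \<Rightarrow> bool" where
  "partial_reset R \<longleftrightarrow> mono R \<and> R 0 = 0"

definition neuronal_reset :: "(real \<Rightarrow> real) \<Rightarrow> bool" where
  "neuronal_reset R \<longleftrightarrow> partial_reset R \<and> (\<forall>z\<ge>0. 0 \<le> R z \<and> R z \<le> z)"

definition Uinv :: "(real \<Rightarrow> real) \<Rightarrow> real \<Rightarrow> real" where
  "Uinv U y = the_inv_into {0..} U y"

definition Hmap :: "(real \<Rightarrow> real) \<Rightarrow> real \<Rightarrow> real \<Rightarrow> real" where
  "Hmap U e x = Uinv U (U x + e)"

definition Jmap :: "(real \<Rightarrow> real) \<Rightarrow> (real \<Rightarrow> real) \<Rightarrow> real \<Rightarrow> real \<Rightarrow> real" where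
  "Jmap U R e x = Uinv U (R (U x + e - 1))"

text \<open>Avalanche stages: (u^(k), Theta^(k)) for the state phi (phases just before the event).
  E i j is the pulse strength from unit j to unit i.\<close>
fun aval :: "(real \<Rightarrow> real) \<Rightarrow> ('n::finite \<Rightarrow> 'n \<Rightarrow> real) \<Rightarrow> real^'n \<Rightarrow> nat
              \<Rightarrow> ('n \<Rightarrow> real) \<times> 'n set" where
  "aval U E \<phi> 0 = ((\<lambda>i. U (\<phi>$i)), {j. \<phi>$j = 1})"
| "aval U E \<phi> (Suc k) =
     (let u = fst (aval U E \<phi> k); \<Theta> = snd (aval U E \<phi> k);
          u' = (\<lambda>i. u i + (\<Sum>j\<in>\<Theta>. E i j))
      in (u', {i. u i < 1 \<and> 1 \<le> u' i}))"

definition Theta :: "(real \<Rightarrow> real) \<Rightarrow> ('n::finite \<Rightarrow> 'n \<Rightarrow> real) \<Rightarrow> real^'n \<Rightarrow> 'n set" where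
  "Theta U E \<phi> = (\<Union>k. snd (aval U E \<phi> k))"

definition post :: "(real \<Rightarrow> real) \<Rightarrow> (real \<Rightarrow> real) \<Rightarrow> ('n::finite \<Rightarrow> 'n \<Rightarrow> real)
                     \<Rightarrow> real^'n \<Rightarrow> real^'n" where
  "post U R E \<phi> = (\<chi> i. let e = (\<Sum>j\<in>Theta U E \<phi>. E i j) in
       if i \<in> Theta U E \<phi> then Jmap U R e (\<phi>$i) else Hmap U e (\<phi>$i))"

text \<open>State just before the next event: after the event, phases grow at unit rate until
  the largest phase reaches 1.\<close>
definition next_pre :: "(real \<Rightarrow> real) \<Rightarrow> (real \<Rightarrow> real) \<Rightarrow> ('n::finite \<Rightarrow> 'n \<Rightarrow> real)
                     \<Rightarrow> real^'n \<Rightarrow> real^'n" where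
  "next_pre U R E \<phi> = (let \<psi> = post U R E \<phi> in
       (\<chi> i. \<psi>$i + (1 - Max (range (\<lambda>j. \<psi>$j)))))"

definition return_time :: "(real \<Rightarrow> real) \<Rightarrow> (real \<Rightarrow> real) \<Rightarrow> ('n::finite \<Rightarrow> 'n \<Rightarrow> real)
                     \<Rightarrow> 'n \<Rightarrow> real^'n \<Rightarrow> nat" where
  "return_time U R E r \<phi> = (LEAST m. 0 < m \<and> r \<in> Theta U E ((next_pre U R E ^^ m) \<phi>))"

definition return_map :: "(real \<Rightarrow> real) \<Rightarrow> (real \<Rightarrow> real) \<Rightarrow> ('n::finite \<Rightarrow> 'n \<Rightarrow> real)
                     \<Rightarrow> 'n \<Rightarrow> real^'n \<Rightarrow> real^'n" where
  "return_map U R E r \<phi> = (next_pre U R E ^^ return_time U R E r \<phi>) \<phi>"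

definition splay_state :: "(real \<Rightarrow> real) \<Rightarrow> (real \<Rightarrow> real) \<Rightarrow> ('n::finite \<Rightarrow> 'n \<Rightarrow> real)
                     \<Rightarrow> 'n \<Rightarrow> real^'n \<Rightarrow> bool" where
  "splay_state U R E r \<phi> \<longleftrightarrow>
     (\<forall>i. 0 \<le> \<phi>$i \<and> \<phi>$i \<le> 1) \<and> \<phi>$r = 1 \<and> r \<in> Theta U E \<phi> \<and>
     (\<exists>m>0. r \<in> Theta U E ((next_pre U R E ^^ m) \<phi>)) \<and>
     return_map U R E r \<phi> = \<phi> \<and>
     (\<forall>k. card (Theta U E ((next_pre U R E ^^ k) \<phi>)) = 1)"

definition lin_stable :: "(real \<Rightarrow> real) \<Rightarrow> (real \<Rightarrow> real) \<Rightarrow> ('n::finite \<Rightarrow> 'n \<Rightarrow> real)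
                     \<Rightarrow> 'n \<Rightarrow> real^'n \<Rightarrow> bool" where
  "lin_stable U R E r \<phi> \<longleftrightarrow>
     (\<exists>L. ((\<lambda>\<delta>. return_map U R E r (\<phi> + \<delta>)) has_derivative L) (at 0 within {\<delta>. \<delta>$r = 0}) \<and>
          (\<forall>\<delta>. \<delta>$r = 0 \<longrightarrow> (\<lambda>n. (L ^^ n) \<delta>) \<longlonglongrightarrow> 0))"

end

theory Submission
  imports Defs
begin



locale ctx =
  fixes U :: "real \<Rightarrow> real" and D :: "nat \<Rightarrow> real \<Rightarrow> real" and R :: "real \<Rightarrow> real" and eps :: real
  assumes rise: "rise_function U D" and D2pos: "\<forall>x\<ge>0. D 2 x > 0"
    and neur: "neuronal_reset R" and epos: "eps > 0"
begin

lemma U0: "U 0 = 0" and U1: "U 1 = 1" and D1pos: "x \<ge> 0 \<Longrightarrow> D 1 x > 0"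
  using rise by (auto simp: rise_function_def)

lemma derU_w: "x \<ge> 0 \<Longrightarrow> (U has_real_derivative D 1 x) (at x within {0..})"
  using rise unfolding rise_function_def higher_derivs_def
  by (metis One_nat_def)

lemma derD1_w: "x \<ge> 0 \<Longrightarrow> (D 1 has_real_derivative D 2 x) (at x within {0..})"
  using rise unfolding rise_function_def higher_derivs_def
  by (metis One_nat_def Suc_1)

lemma int0: "interior {0::real..} = {0<..}"
  by (rule interior_Ici[of "-1"]) auto

lemma derU: "x > 0 \<Longrightarrow> (U has_real_derivative D 1 x) (at x)"
  using derU_w[of x] at_within_interior[of x "{0..}"] int0 by auto

lemma derD1: "x > 0 \<Longrightarrow> (D 1 has_real_derivative D 2 x) (at x)"
  using derD1_w[of x] at_within_interior[of x "{0..}"] int0 by auto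

lemma contU: "continuous_on {0..} U"
  unfolding continuous_on_eq_continuous_within by (auto intro: DERIV_continuous[OF derU_w])

lemma contD1: "continuous_on {0..} (D 1)"
proof -
  { fix x :: real assume "0 \<le> x"
    hence "continuous (at x within {0..}) (D 1)" by (rule DERIV_continuous[OF derD1_w]) }
  thus ?thesis unfolding continuous_on_eq_continuous_within by blast
qed

lemma U_strict: assumes "0 \<le> x" "x < y" shows "U x < U y"
proof (rule DERIV_pos_imp_increasing_open[OF assms(2)])
  fix z assume "x < z" "z < y"
  then have "z > 0" using assms by simp
  then show "\<exists>l. DERIV U z :> l \<and> 0 < l" using derU D1pos by (intro exI[of _ "D 1 z"]) auto
next
  show "continuous_on {x..y} U" by (rule continuous_on_subset[OF contU]) (use assms in auto)
qed

lemma D1_strict: assumes "0 \<le> x" "x < y" shows "D 1 x < D 1 y"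
proof (rule DERIV_pos_imp_increasing_open[OF assms(2)])
  fix z assume "x < z" "z < y"
  then have "z > 0" using assms by simp
  then show "\<exists>l. DERIV (D 1) z :> l \<and> 0 < l" using derD1 D2pos by (intro exI[of _ "D 2 z"]) auto
next
  show "continuous_on {x..y} (D 1)" by (rule continuous_on_subset[OF contD1]) (use assms in auto)
qed

lemma U_mono_iff: "0 \<le> x \<Longrightarrow> 0 \<le> y \<Longrightarrow> U x < U y \<longleftrightarrow> x < y"
  by (metis U_strict linorder_neqE_linordered_idom order_less_asym)

lemma U_le_iff: "0 \<le> x \<Longrightarrow> 0 \<le> y \<Longrightarrow> U x \<le> U y \<longleftrightarrow> x \<le> y"
  by (meson U_mono_iff not_le)

lemma U_inj: "inj_on U {0..}"
  by (rule inj_onI) (metis U_mono_iff atLeast_iff linorder_neqE_linordered_idom order_less_irrefl)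

lemma U_nonneg: "x \<ge> 0 \<Longrightarrow> U x \<ge> 0"
  using U_le_iff[of 0 x] U0 by simp

lemma U_big: assumes "y \<ge> 1" shows "\<exists>x\<ge>0. U x \<ge> y"
proof -
  define b where "b = 1 + (y - 1) / D 1 1 + 1"
  have d1: "D 1 1 > 0" using D1pos by simp
  have "(y-1)/D 1 1 \<ge> 0" using d1 assms by simp
  hence b1: "b > 1" by (simp add: b_def)
  have cb: "continuous_on {1..b} U" by (rule continuous_on_subset[OF contU]) auto
  have db: "U differentiable (at x)" if "1 < x" "x < b" for x
    using derU[of x] that real_differentiable_def by force
  obtain l z where z: "1 < z" "z < b" "DERIV U z :> l" "U b - U 1 = (b - 1) * l"
    using MVT[OF b1 cb db] by blast
  have "l = D 1 z" using z derU[of z] DERIV_unique by force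
  hence "l \<ge> D 1 1" using D1_strict[of 1 z] z by simp
  hence "U b - 1 \<ge> (b - 1) * D 1 1" using z U1 b1 by (simp add: mult_left_mono)
  moreover have "(b - 1) * D 1 1 = y - 1 + D 1 1" using d1
    by (simp add: b_def field_simps)
  ultimately show ?thesis using b1 d1 by (intro exI[of _ b]) auto
qed

lemma U_onto: assumes "y \<ge> 0" shows "\<exists>x\<ge>0. U x = y"
proof -
  obtain b where b: "b \<ge> 0" "U b \<ge> y" using U_big[of "max y 1"] by auto
  have "continuous_on {0..b} U" using contU by (rule continuous_on_subset) auto
  then obtain x where "0 \<le> x" "x \<le> b" "U x = y" using IVT'[of U 0 y b] b assms U0 by auto
  thus ?thesis by auto
qed

definition Ui where "Ui = Uinv U"

lemma Ui_U: "x \<ge> 0 \<Longrightarrow> Ui (U x) = x"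
  unfolding Ui_def Uinv_def by (rule the_inv_into_f_f[OF U_inj]) auto

lemma U_Ui: "y \<ge> 0 \<Longrightarrow> U (Ui y) = y \<and> Ui y \<ge> 0"
  using U_onto[of y] Ui_U by force

lemma Ui0: "Ui 0 = 0" using Ui_U[of 0] U0 by simp

lemma Ui_less_iff: "0 \<le> a \<Longrightarrow> 0 \<le> b \<Longrightarrow> Ui a < Ui b \<longleftrightarrow> a < b"
  using U_mono_iff U_Ui by metis

lemma Ui_le_iff: "0 \<le> a \<Longrightarrow> 0 \<le> b \<Longrightarrow> Ui a \<le> Ui b \<longleftrightarrow> a \<le> b"
  using Ui_less_iff not_le by metis

lemma Ui_pos: "y > 0 \<Longrightarrow> Ui y > 0"
  using Ui_less_iff[of 0 y] Ui0 by simp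

lemma contUi: "continuous_on {0..} Ui"
proof -
  have cb: "continuous_on {0..b} Ui" if b0: "b \<ge> 0" for b
  proof -
    obtain c where c: "c \<ge> 0" "U c = b" using U_onto b0 by auto
    have "continuous_on (U ` {0..c}) Ui"
      by (rule continuous_on_inv) (use contU Ui_U in \<open>auto intro: continuous_on_subset\<close>)
    moreover have "U ` {0..c} = {0..b}"
    proof
      show "U ` {0..c} \<subseteq> {0..b}" using c U_nonneg U_le_iff by auto
      show "{0..b} \<subseteq> U ` {0..c}"
      proof
        fix y assume y: "y \<in> {0..b}"
        then have "U (Ui y) = y" "Ui y \<ge> 0" using U_Ui by auto
        moreover have "Ui y \<le> c" using y Ui_le_iff[of y b] Ui_U c by auto
        ultimately show "y \<in> U ` {0..c}" by (metis atLeastAtMost_iff image_eqI)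
      qed
    qed
    ultimately show ?thesis by simp
  qed
  have "continuous (at x within {0..}) Ui" if x: "x \<ge> 0" for x
  proof -
    have "continuous (at x within {0..x+1}) Ui"
      using cb[of "x+1"] x by (simp add: continuous_on_eq_continuous_within)
    moreover have "at x within {0..x+1} = at x within {0..}"
      by (rule at_within_nhd[of x "{..<x+1}"]) auto
    ultimately show ?thesis by simp
  qed
  then show ?thesis unfolding continuous_on_eq_continuous_within by auto
qed

end



context ctx begin

definition H where "H x = Ui (U x + eps)"

lemma H_facts: assumes "x \<ge> 0"
  shows "H x \<ge> 0" "U (H x) = U x + eps" "H x > x"
proof -
  have y: "U x + eps \<ge> 0" using U_nonneg[OF assms] epos by simp
  show "H x \<ge> 0" "U (H x) = U x + eps" using U_Ui[OF y] by (auto simp: H_def)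
  then show "H x > x" using U_mono_iff[OF assms, of "H x"] epos by simp
qed

lemma H_pos: "x \<ge> 0 \<Longrightarrow> H x > 0" using H_facts by force

lemma H_less_iff: "0 \<le> x \<Longrightarrow> 0 \<le> y \<Longrightarrow> H x < H y \<longleftrightarrow> x < y"
  unfolding H_def using Ui_less_iff U_nonneg U_mono_iff epos
  by (smt (verit))

lemma H_le_iff: "0 \<le> x \<Longrightarrow> 0 \<le> y \<Longrightarrow> H x \<le> H y \<longleftrightarrow> x \<le> y"
  using H_less_iff not_le by metis

lemma H_lt1: "0 \<le> x \<Longrightarrow> H x < 1 \<longleftrightarrow> U x + eps < 1"
  using U_mono_iff[of "H x" 1] H_facts[of x] U1 by simp

lemma contH: "continuous_on {0..} H"
proof -
  have "continuous_on {0..} (\<lambda>x. U x + eps)" using contU by (intro continuous_intros)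
  moreover have "(\<lambda>x. U x + eps) ` {0..} \<subseteq> {0..}" using U_nonneg epos by force
  ultimately show ?thesis unfolding H_def
    using continuous_on_compose2[OF contUi] by blast
qed

lemma isCont_Ui: "y > 0 \<Longrightarrow> isCont Ui y"
  using continuous_on_interior[OF contUi, of y] int0 by auto

lemma derUi: assumes "y > 0" shows "DERIV Ui y :> inverse (D 1 (Ui y))"
proof (rule DERIV_inverse_function[where f=U and a=0 and b="y+1"])
  show "DERIV U (Ui y) :> D 1 (Ui y)" using derU Ui_pos assms by blast
  show "D 1 (Ui y) \<noteq> 0" using D1pos U_Ui assms by (metis less_imp_le order_less_irrefl)
  show "\<And>z. 0 < z \<Longrightarrow> z < y + 1 \<Longrightarrow> U (Ui z) = z" using U_Ui by auto
  show "isCont Ui y" using isCont_Ui assms .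
qed (use assms in auto)

definition a where "a x = D 1 x / D 1 (H x)"

lemma derH: assumes "x > 0" shows "DERIV H x :> a x"
proof -
  have y: "U x + eps > 0" using U_nonneg[of x] assms epos by simp
  have "DERIV (\<lambda>x. Ui (U x + eps)) x :> inverse (D 1 (Ui (U x + eps))) * D 1 x"
  proof (rule DERIV_chain2[where g="\<lambda>x. U x + eps"])
    show "DERIV Ui (U x + eps) :> inverse (D 1 (Ui (U x + eps)))" using derUi[OF y] .
    show "DERIV (\<lambda>x. U x + eps) x :> D 1 x" using derU[OF assms] by (auto intro: derivative_eq_intros)
  qed
  then show ?thesis unfolding H_def[abs_def] a_def H_def by (simp add: field_simps)
qed

lemma a_bounds: assumes "x \<ge> 0" shows "0 < a x" "a x < 1"
proof -
  have "D 1 x > 0" "D 1 (H x) > D 1 x" using D1pos assms D1_strict H_facts assms by auto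
  then show "0 < a x" "a x < 1" unfolding a_def by auto
qed

primrec zz :: "real \<Rightarrow> nat \<Rightarrow> real" where
  "zz d 0 = d"
| "zz d (Suc j) = H (zz d j) + d"

lemma zz_ge: "d \<ge> 0 \<Longrightarrow> zz d j \<ge> d"
  by (induction j) (use H_facts in force)+

lemma zz_0: "U (zz 0 j) = real j * eps"
proof (induction j)
  case 0 thus ?case using U0 by simp
next
  case (Suc j)
  have "zz 0 j \<ge> 0" using zz_ge[of 0] by simp
  thus ?case using Suc H_facts(2)[of "zz 0 j"] by (simp add: algebra_simps)
qed

lemma zz_cont: "continuous_on {0..} (\<lambda>d. zz d j)"
proof (induction j)
  case 0 thus ?case by (simp add: continuous_on_id)
next
  case (Suc j)
  have "(\<lambda>d. zz d j) ` {0..} \<subseteq> {0..}" using zz_ge by (force intro: order_trans)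
  hence "continuous_on {0..} (\<lambda>d. H (zz d j))"
    using continuous_on_compose2[OF contH Suc] by blast
  then show ?case by (simp add: continuous_intros)
qed

lemma exists_delta: assumes "n \<ge> 2" "(real n - 1) * eps < 1"
  shows "\<exists>d. 0 < d \<and> zz d (n-1) = 1"
proof -
  have "U (zz 0 (n-1)) < U 1" using zz_0[of "n-1"] assms U1 by (simp add: of_nat_diff)
  hence z0: "zz 0 (n-1) < 1" using U_mono_iff[of "zz 0 (n-1)" 1] zz_ge[of 0] by auto
  have z1: "zz 1 (n-1) \<ge> 1" using zz_ge[of 1] by simp
  have "continuous_on {0..1} (\<lambda>d. zz d (n-1))"
    by (rule continuous_on_subset[OF zz_cont]) auto
  then obtain d where "0 \<le> d" "d \<le> 1" "zz d (n-1) = 1"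
    using IVT'[of "\<lambda>d. zz d (n-1)" 0 1 1] z0 z1 by auto
  moreover have "d \<noteq> 0" using z0 calculation by auto
  ultimately show ?thesis by (intro exI[of _ d]) auto
qed

lemma zz_step: "d \<ge> 0 \<Longrightarrow> zz d j < zz d (Suc j)"
  using H_facts(3)[of "zz d j"] zz_ge[of d j] by auto

lemma zz_mono: "d \<ge> 0 \<Longrightarrow> j < k \<Longrightarrow> zz d j < zz d k"
  using lift_Suc_mono_less[of "zz d", OF zz_step] by blast

lemma zz_mono_le: "d \<ge> 0 \<Longrightarrow> j \<le> k \<Longrightarrow> zz d j \<le> zz d k"
  using zz_mono by (metis le_less)

end



definition EE :: "real \<Rightarrow> 'n \<Rightarrow> 'n \<Rightarrow> real" where "EE e = (\<lambda>i j. if i = j then 0 else e)"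

context ctx begin

definition S :: "'n::finite \<Rightarrow> 'n \<Rightarrow> real^'n \<Rightarrow> real^'n" where
  "S t s x = (\<chi> i. (if i = t then 0 else H (x$i)) + (1 - H (x$s)))"

lemma Theta_local:
  fixes x :: "real^'n::finite" and t :: 'n
  assumes xt: "x$t = 1" and good: "\<And>i. i \<noteq> t \<Longrightarrow> 0 < x$i \<and> U (x$i) + eps < 1"
  shows "Theta U (EE eps) x = {t}"
proof -
  have lt1: "x$j < 1" if "j \<noteq> t" for j
  proof -
    have "U (x$j) < U 1" using good[OF that] U1 epos by simp
    thus ?thesis using U_mono_iff[of "x$j" 1] good[OF that] by simp
  qed
  have s0: "{j. x$j = 1} = {t}" using xt lt1 by force
  have a0: "aval U (EE eps) x 0 = ((\<lambda>i. U (x$i)), {t})" using s0 by simp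
  have a1: "snd (aval U (EE eps) x (Suc 0)) = {}"
  proof -
    have "\<not> (U (x$i) < 1 \<and> 1 \<le> U (x$i) + (\<Sum>j\<in>{t}. EE eps i j))" for i
      using good[of i] xt U1 by (cases "i = t") (auto simp: EE_def)
    thus ?thesis by (simp add: s0 Let_def)
  qed
  have ak: "snd (aval U (EE eps) x (Suc k)) = {}" for k
  proof (induction k)
    case 0 show ?case using a1 .
  next
    case (Suc k)
    have "snd (aval U (EE eps) x (Suc (Suc k))) = {i. fst (aval U (EE eps) x (Suc k)) i < 1 \<and>
       1 \<le> fst (aval U (EE eps) x (Suc k)) i + sum (EE eps i) (snd (aval U (EE eps) x (Suc k)))}"
      by (simp only: aval.simps(2)[of U "EE eps" x "Suc k"] Let_def snd_conv fst_conv)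
    then show ?case using Suc.IH by auto
  qed
  have "Theta U (EE eps) x = snd (aval U (EE eps) x 0) \<union> (\<Union>k. snd (aval U (EE eps) x (Suc k)))"
    unfolding Theta_def
  proof (intro equalityI subsetI)
    fix y assume "y \<in> (\<Union>k. snd (aval U (EE eps) x k))"
    then obtain k where "y \<in> snd (aval U (EE eps) x k)" by blast
    then show "y \<in> snd (aval U (EE eps) x 0) \<union> (\<Union>k. snd (aval U (EE eps) x (Suc k)))"
      by (cases k) auto
  qed blast
  also have "\<dots> = {t}" using a0 ak by simp
  finally show ?thesis .
qed

lemma next_pre_local:
  fixes x :: "real^'n::finite" and t s :: 'n
  assumes xt: "x$t = 1" and good: "\<And>i. i \<noteq> t \<Longrightarrow> 0 < x$i \<and> U (x$i) + eps < 1"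
    and st: "s \<noteq> t" and smax: "\<And>i. i \<noteq> t \<Longrightarrow> x$i \<le> x$s"
  shows "next_pre U R (EE eps) x = S t s x"
proof -
  have Th: "Theta U (EE eps) x = {t}" using Theta_local[OF xt good] by blast
  have R0: "R 0 = 0" using neur by (simp add: neuronal_reset_def partial_reset_def)
  have post: "post U R (EE eps) x = (\<chi> i. if i = t then 0 else H (x$i))"
    unfolding post_def Th
    by (simp add: vec_eq_iff EE_def Jmap_def Hmap_def xt U1 R0 H_def flip: Ui_def add: Ui0)
  have sp: "x$s > 0" using good st by auto
  have mx: "Max (range (\<lambda>j. post U R (EE eps) x $ j)) = H (x$s)"
  proof (rule Max_eqI)
    show "finite (range (\<lambda>j. post U R (EE eps) x $ j))" by simp
    show "H (x$s) \<in> range (\<lambda>j. post U R (EE eps) x $ j)" using st by (auto simp: post)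
    fix y assume "y \<in> range (\<lambda>j. post U R (EE eps) x $ j)"
    then obtain j where y: "y = post U R (EE eps) x $ j" by auto
    show "y \<le> H (x$s)"
    proof (cases "j = t")
      case True thus ?thesis using y H_pos[of "x$s"] sp by (simp add: post)
    next
      case False
      have "0 \<le> x$j" using good[OF False] by simp
      hence "H (x$j) \<le> H (x$s)" using H_le_iff[of "x$j" "x$s"] smax[OF False] sp by simp
      thus ?thesis using y False by (simp add: post)
    qed
  qed
  show ?thesis unfolding next_pre_def Let_def mx S_def by (simp add: post vec_eq_iff)
qed

end



locale orb = ctx U D R eps for U D R eps +
  fixes r :: "'n::finite" and d :: real and idx :: "'n \<Rightarrow> nat"
  assumes N2: "CARD('n) \<ge> 2" and dpos: "d > 0" and zzd: "zz d (CARD('n) - 1) = 1"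
    and idx: "bij_betw idx UNIV {0..<CARD('n)}"
begin

definition w where "w k = zz d (CARD('n) - 1 - k)"
definition pos :: "nat \<Rightarrow> 'n \<Rightarrow> nat" where
  "pos m i = (idx i + (CARD('n) - idx r) + m * (CARD('n) - 1)) mod CARD('n)"
definition P :: "nat \<Rightarrow> real^'n" where "P m = (\<chi> i. w (pos m i))"
definition tp :: "nat \<Rightarrow> 'n" where "tp m = (SOME i. pos m i = 0)"
definition sp :: "nat \<Rightarrow> 'n" where "sp m = (SOME i. pos m i = 1)"

lemma w0: "w 0 = 1" using zzd by (simp add: w_def)
lemma wlast: "w (CARD('n) - 1) = d" by (simp add: w_def)
lemma w_pos: "w k \<ge> d" using zz_ge dpos by (simp add: w_def)
lemma w_le1: "w k \<le> 1" using zz_mono_le[of d "CARD('n) - 1 - k" "CARD('n) - 1"] dpos zzd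
  by (simp add: w_def)
lemma w_strict: "j < k \<Longrightarrow> k < CARD('n) \<Longrightarrow> w k < w j"
  using zz_mono[of d "CARD('n) - 1 - k" "CARD('n) - 1 - j"] dpos by (simp add: w_def)
lemma w_step: assumes "1 \<le> k" "k \<le> CARD('n) - 1" shows "H (w k) + d = w (k - 1)"
proof -
  have e: "CARD('n) - 1 - (k - 1) = Suc (CARD('n) - 1 - k)" using assms by simp
  have "w (k-1) = zz d (Suc (CARD('n) - 1 - k))" unfolding w_def e ..
  thus ?thesis by (simp add: w_def)
qed
lemma w_U: assumes "1 \<le> k" "k \<le> CARD('n) - 1" shows "U (w k) + eps < 1"
proof -
  have "H (w k) < 1" using w_step[OF assms] w_le1[of "k-1"] dpos by simp
  thus ?thesis using H_lt1 w_pos[of k] dpos by simp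
qed

lemma Npos: "CARD('n) > 0" using N2 by simp

lemma pos_lt: "pos m i < CARD('n)" using Npos by (simp add: pos_def)

lemma idx_lt: "idx i < CARD('n)" using idx by (auto simp: bij_betw_def)

lemma pos_Suc: "pos (Suc m) i = (if pos m i = 0 then CARD('n) - 1 else pos m i - 1)"
proof -
  define c where "c = idx i + (CARD('n) - idx r) + m * (CARD('n) - 1)"
  have e: "Suc m * (CARD('n) - 1) = m * (CARD('n) - 1) + (CARD('n) - 1)" by simp
  have "pos (Suc m) i = (c + (CARD('n) - 1)) mod CARD('n)" by (simp only: pos_def c_def e add.assoc)
  also have "\<dots> = (pos m i + (CARD('n) - 1)) mod CARD('n)" by (simp only: pos_def c_def[symmetric] mod_add_left_eq)
  also have "\<dots> = (if pos m i = 0 then CARD('n) - 1 else pos m i - 1)"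
  proof (cases "pos m i = 0")
    case True thus ?thesis using Npos by simp
  next
    case False
    have e2: "pos m i + (CARD('n) - 1) = (pos m i - 1) + CARD('n)" using False Npos by simp
    have "(pos m i + (CARD('n) - 1)) mod CARD('n) = (pos m i - 1) mod CARD('n)"
      by (simp only: e2 mod_add_self2)
    moreover have "pos m i - 1 < CARD('n)" using pos_lt[of m i] by simp
    ultimately show ?thesis using False by simp
  qed
  finally show ?thesis .
qed

lemma mod_cancel_aux: fixes a K N :: nat assumes "a < N"
  shows "a = ((a + K) mod N + (N - 1) * K) mod N"
proof -
  obtain M where M: "N = Suc M" using assms by (cases N) auto
  have e: "a + K + (N - 1) * K = a + N * K" using M by (simp add: algebra_simps)
  have "a = (a + N * K) mod N" using assms by simp
  also have "\<dots> = (a + K + (N - 1) * K) mod N" by (simp only: e)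
  also have "\<dots> = ((a + K) mod N + (N - 1) * K) mod N" by (simp only: mod_add_left_eq)
  finally show ?thesis .
qed

lemma pos_inj: "pos m i = pos m j \<Longrightarrow> i = j"
proof -
  assume h: "pos m i = pos m j"
  define K where "K = (CARD('n) - idx r) + m * (CARD('n) - 1)"
  have "(idx i + K) mod CARD('n) = (idx j + K) mod CARD('n)" using h by (simp add: pos_def K_def add.assoc)
  hence "idx i = idx j" using mod_cancel_aux[OF idx_lt[of i], of K] mod_cancel_aux[OF idx_lt[of j], of K]
    by simp
  thus "i = j" using idx by (auto simp: bij_betw_def inj_def)
qed

lemma pos_surj: "k < CARD('n) \<Longrightarrow> \<exists>i. pos m i = k"
proof -
  assume k: "k < CARD('n)"
  have "inj (pos m)" using pos_inj by (auto simp: inj_def)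
  hence "card (range (pos m)) = CARD('n)" by (simp add: card_image)
  moreover have "range (pos m) \<subseteq> {0..<CARD('n)}" using pos_lt by auto
  ultimately have "range (pos m) = {0..<CARD('n)}" by (simp add: card_subset_eq)
  moreover have "k \<in> {0..<CARD('n)}" using k by simp
  ultimately have "k \<in> range (pos m)" by simp
  thus ?thesis by auto
qed

lemma tp: "pos m (tp m) = 0" unfolding tp_def by (rule someI_ex) (use pos_surj Npos in auto)
lemma sp: "pos m (sp m) = 1" unfolding sp_def by (rule someI_ex) (use pos_surj N2 in auto)
lemma tp_iff: "pos m i = 0 \<longleftrightarrow> i = tp m" using tp pos_inj by metis
lemma sp_iff: "pos m i = 1 \<longleftrightarrow> i = sp m" using sp pos_inj by metis
lemma sp_ne_tp: "sp m \<noteq> tp m" using tp[of m] sp[of m] by (metis zero_neq_one)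
lemma sp_tp: "sp m = tp (Suc m)" using tp_iff[of "Suc m" "sp m"] by (simp add: pos_Suc sp)

lemma pos0r: "pos 0 r = 0" using idx_lt[of r] by (simp add: pos_def)
lemma tp0: "tp 0 = r" using tp_iff pos0r by simp

lemma posN: "pos CARD('n) i = pos 0 i"
proof -
  have "pos CARD('n) i = (idx i + (CARD('n) - idx r) + (CARD('n) - 1) * CARD('n)) mod CARD('n)"
    by (simp add: pos_def mult.commute)
  also have "\<dots> = pos 0 i" by (simp add: pos_def)
  finally show ?thesis .
qed

lemma PN: "P CARD('n) = P 0" by (simp add: P_def posN)
lemma tpN: "tp CARD('n) = r" using tp_iff[of "CARD('n)" r] posN pos0r by simp

lemma pos_r: "m \<le> CARD('n) \<Longrightarrow> pos m r = (if m = 0 then 0 else CARD('n) - m)"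
proof (induction m)
  case 0 thus ?case using pos0r by simp
next
  case (Suc m) thus ?case by (simp add: pos_Suc)
qed

lemma tp_ne_r: "0 < m \<Longrightarrow> m < CARD('n) \<Longrightarrow> tp m \<noteq> r"
  using pos_r[of m] tp[of m] by auto

lemma P_top: "P m $ tp m = 1" by (simp add: P_def tp w0)
lemma P_good: "i \<noteq> tp m \<Longrightarrow> 0 < P m $ i \<and> U (P m $ i) + eps < 1"
proof -
  assume "i \<noteq> tp m"
  hence "1 \<le> pos m i" using tp_iff[of m i] by simp
  moreover have "pos m i \<le> CARD('n) - 1" using pos_lt[of m i] by simp
  ultimately show ?thesis using w_U w_pos[of "pos m i"] dpos by (simp add: P_def)
qed
lemma P_s: "P m $ sp m = w 1" by (simp add: P_def sp)
lemma P_smax: "i \<noteq> tp m \<Longrightarrow> i \<noteq> sp m \<Longrightarrow> P m $ i < P m $ sp m"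
proof -
  assume "i \<noteq> tp m" "i \<noteq> sp m"
  hence "1 < pos m i" using tp_iff[of m i] sp_iff[of m i] by linarith
  thus ?thesis using w_strict[of 1 "pos m i"] pos_lt[of m i] by (simp add: P_def sp)
qed

lemma P_smax_le: "i \<noteq> tp m \<Longrightarrow> P m $ i \<le> P m $ sp m"
  using P_smax[of i m] by (cases "i = sp m") auto

lemma H_w1: "H (w 1) = 1 - d"
proof -
  have "1 \<le> CARD('n) - 1" using N2 by simp
  thus ?thesis using w_step[of 1] w0 by simp
qed

lemma next_P: "next_pre U R (EE eps) (P m) = P (Suc m)"
proof -
  have "next_pre U R (EE eps) (P m) = S (tp m) (sp m) (P m)"
    by (rule next_pre_local[of "P m" "tp m" "sp m", OF P_top P_good sp_ne_tp P_smax_le])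
  also have "\<dots> = P (Suc m)"
  proof (subst vec_eq_iff, intro allI)
    fix i
    show "S (tp m) (sp m) (P m) $ i = P (Suc m) $ i"
    proof (cases "i = tp m")
      case True thus ?thesis using tp[of m] wlast H_w1 by (simp add: S_def P_s P_def pos_Suc sp)
    next
      case False
      hence p: "1 \<le> pos m i" "pos m i \<le> CARD('n) - 1" using tp_iff[of m i] pos_lt[of m i] by auto
      show ?thesis using False w_step[OF p] p H_w1 by (simp add: S_def P_s P_def pos_Suc sp)
    qed
  qed
  finally show ?thesis .
qed

lemma iter_P: "(next_pre U R (EE eps) ^^ m) (P 0) = P m"
  by (induction m) (auto simp: next_P)

lemma Theta_P: "Theta U (EE eps) (P m) = {tp m}"
  by (rule Theta_local[OF P_top P_good])

lemma return_time_P: "return_time U R (EE eps) r (P 0) = CARD('n)"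
  unfolding return_time_def iter_P Theta_P
proof (rule Least_equality)
  show "0 < CARD('n) \<and> r \<in> {tp CARD('n)}" using tpN Npos by simp
  fix m assume "0 < m \<and> r \<in> {tp m}"
  thus "CARD('n) \<le> m" using tp_ne_r[of m] by force
qed

lemma splay: "splay_state U R (EE eps) r (P 0)"
  unfolding splay_state_def
proof (intro conjI allI)
  fix i
  show "0 \<le> P 0 $ i" "P 0 $ i \<le> 1" using w_pos w_le1 dpos by (auto simp: P_def intro: order_trans[of 0 d])
next
  show "P 0 $ r = 1" using P_top tp0 by metis
  show "r \<in> Theta U (EE eps) (P 0)" using Theta_P tp0 by simp
  show "\<exists>m>0. r \<in> Theta U (EE eps) ((next_pre U R (EE eps) ^^ m) (P 0))"
    using iter_P Theta_P tpN Npos by (intro exI[of _ "CARD('n)"]) auto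
  show "return_map U R (EE eps) r (P 0) = P 0"
    unfolding return_map_def return_time_P iter_P PN ..
  fix k show "card (Theta U (EE eps) ((next_pre U R (EE eps) ^^ k) (P 0))) = 1"
    by (simp add: iter_P Theta_P)
qed

end



lemma vec_sum_axis: "(\<Sum>i\<in>UNIV. (v $ i) *\<^sub>R axis i (1::real)) = (v :: real^'n::finite)"
  by (simp add: vec_eq_iff axis_def if_distrib sum.delta cong: if_cong)

lemma vec_has_derivative:
  fixes f :: "'a::real_normed_vector \<Rightarrow> real^'n::finite"
  assumes "\<And>i. ((\<lambda>x. f x $ i) has_derivative (\<lambda>h. f' h $ i)) F"
  shows "(f has_derivative f') F"
proof -
  have "((\<lambda>x. \<Sum>i\<in>UNIV. (f x $ i) *\<^sub>R axis i (1::real)) has_derivative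
         (\<lambda>h. \<Sum>i\<in>UNIV. (f' h $ i) *\<^sub>R axis i (1::real))) F"
    by (intro has_derivative_sum has_derivative_scaleR_left assms)
  thus ?thesis by (simp add: vec_sum_axis)
qed

context ctx begin

lemma H_comp_deriv:
  fixes p :: "real^'n::finite"
  assumes "p$i > 0"
  shows "((\<lambda>x. H (x$i)) has_derivative (\<lambda>h. a (p$i) * h$i)) (at p)"
proof -
  have "(H has_derivative (\<lambda>h. a (p$i) * h)) (at (p$i))"
    using derH[OF assms] by (simp add: has_field_derivative_def)
  from diff_chain_at[OF bounded_linear_imp_has_derivative[OF bounded_linear_vec_nth[of i]] this]
  show ?thesis by (simp add: o_def)
qed

definition DSf :: "'n::finite \<Rightarrow> 'n \<Rightarrow> real^'n \<Rightarrow> real^'n \<Rightarrow> real^'n" where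
  "DSf t s p h = (\<chi> i. (if i = t then 0 else a (p$i) * h$i) - a (p$s) * h$s)"

lemma S_deriv:
  fixes p :: "real^'n::finite"
  assumes "\<And>i. i \<noteq> t \<Longrightarrow> p$i > 0" and "s \<noteq> t"
  shows "(S t s has_derivative DSf t s p) (at p)"
proof (rule vec_has_derivative)
  fix i
  have hs: "((\<lambda>x. H (x$s)) has_derivative (\<lambda>h. a (p$s) * h$s)) (at p)"
    using H_comp_deriv assms by blast
  show "((\<lambda>x. S t s x $ i) has_derivative (\<lambda>h. DSf t s p h $ i)) (at p)"
  proof (cases "i = t")
    case True
    have "((\<lambda>x. 0 + (1 - H (x$s))) has_derivative (\<lambda>h. 0 + (0 - a (p$s) * h$s))) (at p)"
      by (intro has_derivative_add has_derivative_diff has_derivative_const hs)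
    thus ?thesis using True by (simp add: S_def DSf_def)
  next
    case False
    have "((\<lambda>x. H (x$i) + (1 - H (x$s))) has_derivative (\<lambda>h. a (p$i) * h$i + (0 - a (p$s) * h$s))) (at p)"
      by (intro has_derivative_add has_derivative_diff has_derivative_const hs H_comp_deriv) (use assms False in auto)
    thus ?thesis using False by (simp add: S_def DSf_def)
  qed
qed

lemma S_s: "s \<noteq> t \<Longrightarrow> S t s x $ s = 1" by (simp add: S_def)

definition osc :: "real^'n::finite \<Rightarrow> real" where
  "osc v = Max (range (\<lambda>i. v$i)) - Min (range (\<lambda>i. v$i))"

lemma osc_bounds: "Min (range (\<lambda>i. v$i)) \<le> v$i" "v$i \<le> Max (range (\<lambda>i. v$i))"
  by auto

lemma osc_nonneg: "osc v \<ge> 0"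
  using osc_bounds[of v undefined] by (simp add: osc_def)

lemma osc_abs: assumes "v$r = 0" shows "\<bar>v$i\<bar> \<le> osc v"
  using osc_bounds[of v i] osc_bounds[of v r] assms unfolding osc_def abs_le_iff
  by (intro conjI) linarith+

lemma norm_osc: assumes "v$r = 0" shows "norm v \<le> real CARD('n) * osc (v::real^'n::finite)"
proof -
  have "norm v \<le> (\<Sum>i\<in>UNIV. \<bar>v$i\<bar>)" by (rule norm_le_l1_cart)
  also have "\<dots> \<le> of_nat (card (UNIV::'n set)) * osc v"
    by (rule sum_bounded_above) (use osc_abs[OF assms] in auto)
  finally show ?thesis by simp
qed

lemma osc_step:
  fixes v :: "real^'n::finite"
  assumes vt: "v$t = 0" and b: "\<And>i. i \<noteq> t \<Longrightarrow> 0 \<le> b i \<and> b i \<le> c" and c: "c \<ge> 0"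
  shows "osc (\<chi> i. (if i = t then 0 else b i * v$i) - K) \<le> c * osc v"
proof -
  define M where "M = Max (range (\<lambda>i. v$i))"
  define m where "m = Min (range (\<lambda>i. v$i))"
  have M0: "M \<ge> 0" and m0: "m \<le> 0" using osc_bounds[of v t] vt by (auto simp: M_def m_def)
  have vb: "m \<le> v$i" "v$i \<le> M" for i using osc_bounds[of v i] by (auto simp: M_def m_def)
  have up: "(if i = t then 0 else b i * v$i) \<le> c * M" for i
  proof (cases "i = t")
    case True thus ?thesis using c M0 by simp
  next
    case False
    hence bi: "0 \<le> b i" "b i \<le> c" using b by auto
    show ?thesis
    proof (cases "v$i \<ge> 0")
      case True
      have "b i * v$i \<le> c * v$i" using bi True by (simp add: mult_right_mono)
      also have "\<dots> \<le> c * M" using vb[of i] c by (simp add: mult_left_mono)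
      finally show ?thesis using False by simp
    next
      case nf: False
      have "b i * v$i \<le> 0" using bi nf by (simp add: mult_nonneg_nonpos)
      also have "0 \<le> c * M" using c M0 by simp
      finally show ?thesis using False by simp
    qed
  qed
  have lo: "c * m \<le> (if i = t then 0 else b i * v$i)" for i
  proof (cases "i = t")
    case True thus ?thesis using c m0 by (simp add: mult_nonneg_nonpos)
  next
    case False
    hence bi: "0 \<le> b i" "b i \<le> c" using b by auto
    show ?thesis
    proof (cases "v$i \<ge> 0")
      case True
      have "c * m \<le> 0" using c m0 by (simp add: mult_nonneg_nonpos)
      also have "0 \<le> b i * v$i" using bi True by simp
      finally show ?thesis using False by simp
    next
      case nf: False
      have "c * m \<le> c * v$i" using vb[of i] c by (simp add: mult_left_mono)
      also have "\<dots> \<le> b i * v$i" using bi nf by (simp add: mult_right_mono_neg)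
      finally show ?thesis using False by simp
    qed
  qed
  define w where "w = (\<chi> i. (if i = t then 0 else b i * v$i) - K)"
  have "Max (range (\<lambda>i. w$i)) \<le> c * M - K" using up by (simp add: w_def)
  moreover have "c * m - K \<le> Min (range (\<lambda>i. w$i))" using lo by (simp add: w_def)
  ultimately have "osc w \<le> c * M - c * m" unfolding osc_def by linarith
  thus ?thesis by (simp add: w_def osc_def M_def m_def right_diff_distrib)
qed

end



context orb begin

primrec C :: "nat \<Rightarrow> real^'n \<Rightarrow> real^'n" where
  "C 0 x = x"
| "C (Suc m) x = S (tp m) (sp m) (C m x)"

primrec L :: "nat \<Rightarrow> real^'n \<Rightarrow> real^'n" where
  "L 0 h = h"
| "L (Suc m) h = DSf (tp m) (sp m) (P m) (L m h)"

lemma S_P: "S (tp m) (sp m) (P m) = P (Suc m)"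
  using next_pre_local[of "P m" "tp m" "sp m", OF P_top P_good sp_ne_tp P_smax_le] next_P by simp

lemma C_P: "C m (P 0) = P m"
  by (induction m) (auto simp: S_P)

lemma C_deriv: "(C m has_derivative L m) (at (P 0))"
proof (induction m)
  case 0
  show ?case using has_derivative_ident by (simp add: id_def[symmetric] fun_eq_iff)
next
  case (Suc m)
  have "(S (tp m) (sp m) has_derivative DSf (tp m) (sp m) (P m)) (at (C m (P 0)))"
    unfolding C_P by (rule S_deriv) (use P_good sp_ne_tp in auto)
  from diff_chain_at[OF Suc.IH this]
  show ?case by (simp add: o_def)
qed

abbreviation "F \<equiv> at (0::real^'n) within {\<delta>. \<delta>$r = 0}"

lemma C_tendsto: "((\<lambda>\<delta>. C m (P 0 + \<delta>)) \<longlongrightarrow> P m) F"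
proof -
  have ic: "isCont (C m) (P 0)" using has_derivative_continuous[OF C_deriv] .
  have "((\<lambda>\<delta>. P 0 + \<delta>) \<longlongrightarrow> P 0) F"
    using tendsto_add[OF tendsto_const[of "P 0"] tendsto_ident_at[of 0 "{\<delta>. \<delta>$r = 0}"]] by simp
  from isCont_tendsto_compose[OF ic this] show ?thesis by (simp add: C_P)
qed

definition Good :: "nat \<Rightarrow> real^'n \<Rightarrow> bool" where
  "Good m x \<longleftrightarrow> x $ tp m = 1 \<and> (\<forall>i. i \<noteq> tp m \<longrightarrow> 0 < x$i \<and> U (x$i) + eps < 1)
      \<and> (\<forall>i. i \<noteq> tp m \<longrightarrow> x$i \<le> x $ sp m)"

lemma ev_top: "eventually (\<lambda>\<delta>. C m (P 0 + \<delta>) $ tp m = 1) F"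
proof (cases m)
  case 0
  have "\<forall>\<delta>\<in>{\<delta>. \<delta>$r = 0}. C m (P 0 + \<delta>) $ tp m = 1" using 0 tp0 P_top[of 0] by simp
  thus ?thesis unfolding eventually_at_filter by (auto intro: always_eventually)
next
  case (Suc k)
  thus ?thesis using S_s[OF sp_ne_tp[of k]] by (simp add: sp_tp[symmetric])
qed

lemma ev_comp: "eventually (\<lambda>\<delta>. 0 < C m (P 0 + \<delta>) $ i) F" if "i \<noteq> tp m"
proof -
  have "((\<lambda>\<delta>. C m (P 0 + \<delta>) $ i) \<longlongrightarrow> P m $ i) F"
    using tendsto_vec_nth[OF C_tendsto] .
  thus ?thesis using P_good[OF that] order_tendstoD(1) by blast
qed

lemma ev_U: "eventually (\<lambda>\<delta>. U (C m (P 0 + \<delta>) $ i) + eps < 1) F" if "i \<noteq> tp m"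
proof -
  have pi: "P m $ i > 0" using P_good[OF that] by simp
  have ic: "isCont U (P m $ i)" using DERIV_isCont[OF derU[OF pi]] .
  have "((\<lambda>\<delta>. U (C m (P 0 + \<delta>) $ i) + eps) \<longlongrightarrow> U (P m $ i) + eps) F"
    by (intro tendsto_add tendsto_const isCont_tendsto_compose[OF ic] tendsto_vec_nth C_tendsto)
  thus ?thesis using P_good[OF that] order_tendstoD(2) by blast
qed

lemma ev_max: "eventually (\<lambda>\<delta>. C m (P 0 + \<delta>) $ i \<le> C m (P 0 + \<delta>) $ sp m) F" if "i \<noteq> tp m"
proof (cases "i = sp m")
  case True thus ?thesis by simp
next
  case False
  have "((\<lambda>\<delta>. C m (P 0 + \<delta>) $ sp m - C m (P 0 + \<delta>) $ i) \<longlongrightarrow> P m $ sp m - P m $ i) F"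
    by (intro tendsto_diff tendsto_vec_nth C_tendsto)
  moreover have "P m $ sp m - P m $ i > 0" using P_smax[OF that False] by simp
  ultimately have "eventually (\<lambda>\<delta>. 0 < C m (P 0 + \<delta>) $ sp m - C m (P 0 + \<delta>) $ i) F"
    using order_tendstoD(1) by blast
  thus ?thesis by (rule eventually_mono) simp
qed

lemma ev_good: "eventually (\<lambda>\<delta>. Good m (C m (P 0 + \<delta>))) F"
proof -
  have "eventually (\<lambda>\<delta>. \<forall>i. i \<noteq> tp m \<longrightarrow> 0 < C m (P 0 + \<delta>) $ i \<and> U (C m (P 0 + \<delta>) $ i) + eps < 1
       \<and> C m (P 0 + \<delta>) $ i \<le> C m (P 0 + \<delta>) $ sp m) F"
  proof (rule eventually_all_finite, goal_cases)
    case (1 i)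
    show ?case
    proof (cases "i = tp m")
      case True thus ?thesis by simp
    next
      case False
      show ?thesis
        using eventually_conj[OF ev_comp[OF False] eventually_conj[OF ev_U[OF False] ev_max[OF False]]]
        by (rule eventually_mono) simp
    qed
  qed
  from eventually_conj[OF ev_top this] show ?thesis
    by (rule eventually_mono) (auto simp: Good_def)
qed

lemma next_Good: "Good m x \<Longrightarrow> next_pre U R (EE eps) x = S (tp m) (sp m) x"
  unfolding Good_def by (intro next_pre_local sp_ne_tp) auto

lemma Theta_Good: "Good m x \<Longrightarrow> Theta U (EE eps) x = {tp m}"
  unfolding Good_def by (intro Theta_local) auto

lemma ev_eq: "eventually (\<lambda>\<delta>. (next_pre U R (EE eps) ^^ m) (P 0 + \<delta>) = C m (P 0 + \<delta>)) F"
proof (induction m)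
  case 0 show ?case by simp
next
  case (Suc m)
  from eventually_conj[OF Suc.IH ev_good[of m]] show ?case
    by (rule eventually_mono) (simp add: next_Good)
qed

lemma ev_rm: "eventually (\<lambda>\<delta>. return_map U R (EE eps) r (P 0 + \<delta>) = C CARD('n) (P 0 + \<delta>)) F"
proof -
  have "eventually (\<lambda>\<delta>. \<forall>m\<in>{..CARD('n)}. (next_pre U R (EE eps) ^^ m) (P 0 + \<delta>) = C m (P 0 + \<delta>)
          \<and> Good m (C m (P 0 + \<delta>))) F"
    by (rule eventually_ball_finite) (use eventually_conj[OF ev_eq ev_good] in auto)
  then show ?thesis
  proof (rule eventually_mono)
    fix \<delta> assume h: "\<forall>m\<in>{..CARD('n)}. (next_pre U R (EE eps) ^^ m) (P 0 + \<delta>) = C m (P 0 + \<delta>)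
          \<and> Good m (C m (P 0 + \<delta>))"
    have th: "Theta U (EE eps) ((next_pre U R (EE eps) ^^ m) (P 0 + \<delta>)) = {tp m}" if "m \<le> CARD('n)" for m
      using h that Theta_Good by auto
    have "return_time U R (EE eps) r (P 0 + \<delta>) = CARD('n)"
      unfolding return_time_def
    proof (rule Least_equality)
      show "0 < CARD('n) \<and> r \<in> Theta U (EE eps) ((next_pre U R (EE eps) ^^ CARD('n)) (P 0 + \<delta>))"
        using th[of "CARD('n)"] tpN Npos by simp
      fix m assume m: "0 < m \<and> r \<in> Theta U (EE eps) ((next_pre U R (EE eps) ^^ m) (P 0 + \<delta>))"
      show "CARD('n) \<le> m"
      proof (rule ccontr)
        assume "\<not> CARD('n) \<le> m"
        hence "m < CARD('n)" by simp
        thus False using th[of m] m tp_ne_r[of m] by auto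
      qed
    qed
    thus "return_map U R (EE eps) r (P 0 + \<delta>) = C CARD('n) (P 0 + \<delta>)"
      using h by (simp add: return_map_def)
  qed
qed

lemma rm_deriv: "((\<lambda>\<delta>. return_map U R (EE eps) r (P 0 + \<delta>)) has_derivative L CARD('n)) F"
proof -
  have ev': "eventually (\<lambda>\<delta>. C CARD('n) (P 0 + \<delta>) = return_map U R (EE eps) r (P 0 + \<delta>)) F"
    by (rule eventually_mono[OF ev_rm]) simp
  show ?thesis
proof (rule has_derivative_transform_eventually[OF _ ev'])
  have "((\<lambda>\<delta>. P 0 + \<delta>) has_derivative (\<lambda>h. h)) (at 0)"
    by (intro derivative_eq_intros) auto
  from diff_chain_at[OF this, of "C CARD('n)" "L CARD('n)"] C_deriv[of "CARD('n)"]
  have "((\<lambda>\<delta>. C CARD('n) (P 0 + \<delta>)) has_derivative L CARD('n)) (at 0)"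
    by (simp add: o_def)
  thus "((\<lambda>\<delta>. C CARD('n) (P 0 + \<delta>)) has_derivative L CARD('n)) F"
    by (rule has_derivative_at_withinI)
  show "C CARD('n) (P 0 + 0) = return_map U R (EE eps) r (P 0 + 0)"
    using splay unfolding splay_state_def by (simp add: C_P PN)
qed simp
qed

end



context orb begin

definition cc where "cc = Max ((\<lambda>k. a (w k)) ` {1..CARD('n)-1})"

lemma cc_props: "cc < 1" "0 \<le> cc"
proof -
  have ne: "{1..CARD('n)-1} \<noteq> {}" using N2 by auto
  have "a (w k) < 1" for k using a_bounds[of "w k"] w_pos[of k] dpos by simp
  thus "cc < 1" using ne by (simp add: cc_def)
  have "0 < a (w 1)" using a_bounds[of "w 1"] w_pos[of 1] dpos by simp
  moreover have "a (w 1) \<le> cc" unfolding cc_def by (rule Max_ge) (use N2 in auto)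
  ultimately show "0 \<le> cc" by simp
qed

lemma a_le_cc: assumes "i \<noteq> tp m" shows "0 \<le> a (P m $ i) \<and> a (P m $ i) \<le> cc"
proof -
  have p: "1 \<le> pos m i" "pos m i \<le> CARD('n) - 1" using assms tp_iff[of m i] pos_lt[of m i] by auto
  have "a (w (pos m i)) \<le> cc" unfolding cc_def by (rule Max_ge) (use p in auto)
  moreover have "0 < a (w (pos m i))" using a_bounds[of "w (pos m i)"] w_pos[of "pos m i"] dpos by simp
  ultimately show ?thesis by (simp add: P_def)
qed

lemma L_contr: assumes "v $ r = 0"
  shows "L m v $ tp m = 0 \<and> osc (L m v) \<le> cc ^ m * osc v"
proof (induction m)
  case 0 thus ?case using assms tp0 by simp
next
  case (Suc m)
  have z: "L m v $ tp m = 0" using Suc.IH by simp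
  have "L (Suc m) v $ tp (Suc m) = 0"
    using sp_ne_tp[of m] by (simp add: sp_tp[symmetric] DSf_def)
  moreover have "osc (L (Suc m) v) \<le> cc * osc (L m v)"
    unfolding L.simps DSf_def
    by (rule osc_step[OF z]) (use a_le_cc cc_props in auto)
  moreover have "cc * osc (L m v) \<le> cc * (cc ^ m * osc v)"
    using Suc.IH cc_props by (simp add: mult_left_mono)
  ultimately show ?case by simp
qed

lemma LN_iter: assumes "v $ r = 0"
  shows "(L CARD('n) ^^ n) v $ r = 0 \<and> osc ((L CARD('n) ^^ n) v) \<le> (cc ^ CARD('n)) ^ n * osc v"
proof (induction n)
  case 0 thus ?case using assms by simp
next
  case (Suc n)
  let ?u = "(L CARD('n) ^^ n) v"
  have c: "L CARD('n) ?u $ r = 0 \<and> osc (L CARD('n) ?u) \<le> cc ^ CARD('n) * osc ?u"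
    using L_contr[of ?u "CARD('n)"] Suc.IH tpN by simp
  have "cc ^ CARD('n) * osc ?u \<le> cc ^ CARD('n) * ((cc ^ CARD('n)) ^ n * osc v)"
    using Suc.IH cc_props by (simp add: mult_left_mono)
  thus ?case using c by (simp add: mult.assoc)
qed

lemma stable: "lin_stable U R (EE eps) r (P 0)"
  unfolding lin_stable_def
proof (intro exI conjI allI impI)
  show "((\<lambda>\<delta>. return_map U R (EE eps) r (P 0 + \<delta>)) has_derivative L CARD('n)) F" by (rule rm_deriv)
  fix v :: "real^'n" assume v: "v $ r = 0"
  define q where "q = cc ^ CARD('n)"
  have q: "norm q < 1" using cc_props Npos by (simp add: q_def power_less_one_iff)
  show "(\<lambda>n. (L CARD('n) ^^ n) v) \<longlonglongrightarrow> 0"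
  proof (rule Lim_null_comparison)
    show "eventually (\<lambda>n. norm ((L CARD('n) ^^ n) v) \<le> real CARD('n) * (q ^ n * osc v)) sequentially"
    proof (rule always_eventually, intro allI)
      fix n
      have h: "(L CARD('n) ^^ n) v $ r = 0" "osc ((L CARD('n) ^^ n) v) \<le> q ^ n * osc v"
        using LN_iter[OF v, of n] by (auto simp: q_def)
      have "norm ((L CARD('n) ^^ n) v) \<le> real CARD('n) * osc ((L CARD('n) ^^ n) v)"
        by (rule norm_osc[OF h(1)])
      also have "\<dots> \<le> real CARD('n) * (q ^ n * osc v)" using h(2) by (simp add: mult_left_mono)
      finally show "norm ((L CARD('n) ^^ n) v) \<le> real CARD('n) * (q ^ n * osc v)" .
    qed
    show "(\<lambda>n. real CARD('n) * (q ^ n * osc v)) \<longlonglongrightarrow> 0"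
      by (intro tendsto_mult_right_zero tendsto_mult_left_zero LIMSEQ_power_zero q)
  qed
qed

end



context ctx begin

lemma next_pre_single:
  fixes x :: "real^'n::finite" and t :: 'n
  assumes all: "\<And>i. i = t" and xt: "x$t = 1"
  shows "next_pre U R (EE eps) x = x" and "Theta U (EE eps) x = {t}"
proof -
  show Th: "Theta U (EE eps) x = {t}" using Theta_local[of x t] xt all by blast
  have R0: "R 0 = 0" using neur by (simp add: neuronal_reset_def partial_reset_def)
  have xi: "x$i = 1" for i using all xt by metis
  have post: "post U R (EE eps) x = (\<chi> i. 0)"
    unfolding post_def Th using all
    by (simp add: vec_eq_iff EE_def Jmap_def xi U1 R0 flip: Ui_def add: Ui0)
  have "range (\<lambda>j. post U R (EE eps) x $ j) = {0}" by (simp add: post)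
  then show "next_pre U R (EE eps) x = x"
    unfolding next_pre_def Let_def using all xt by (simp add: post vec_eq_iff) (metis all xt)
qed

end

theorem mainTheorem4:
  fixes U :: "real \<Rightarrow> real" and D :: "nat \<Rightarrow> real \<Rightarrow> real" and R :: "real \<Rightarrow> real"
    and \<epsilon> :: real and r :: "'n::finite"
  assumes "rise_function U D"
    and "\<forall>x\<ge>0. D 2 x > 0"
    and "neuronal_reset R"
    and "\<epsilon> > 0"
    and "(real CARD('n) - 1) * \<epsilon> < 1"
  shows "\<exists>\<phi>. splay_state U R (\<lambda>i j. if i = j then 0 else \<epsilon>) r \<phi> \<and>
             lin_stable U R (\<lambda>i j. if i = j then 0 else \<epsilon>) r \<phi>"
proof -
  interpret ctx U D R \<epsilon> using assms by unfold_locales auto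
  have EE: "(\<lambda>i j. if i = j then 0 else \<epsilon>) = (EE \<epsilon> :: 'n \<Rightarrow> 'n \<Rightarrow> real)" by (simp add: EE_def)
  show ?thesis
  proof (cases "CARD('n) \<ge> 2")
    case True
    obtain d where d: "0 < d" "zz d (CARD('n) - 1) = 1" using exists_delta[OF True assms(5)] by blast
    obtain idx where idx: "bij_betw idx (UNIV::'n set) {0..<CARD('n)}"
      using ex_bij_betw_finite_nat[of "UNIV::'n set"] by auto
    interpret o: orb U D R \<epsilon> r d idx using True d idx by unfold_locales auto
    show ?thesis unfolding EE using o.splay o.stable by blast
  next
    case False
    have "0 < CARD('n)" by simp
    hence c1: "CARD('n) = 1" using False by linarith
    have all: "\<And>i::'n. i = r" using c1 by (metis card_1_singletonE singletonD UNIV_I)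
    define \<phi> :: "real^'n" where "\<phi> = (\<chi> i. 1)"
    have ph: "\<phi> $ r = 1" by (simp add: \<phi>_def)
    have np: "next_pre U R (EE \<epsilon>) \<phi> = \<phi>" by (rule next_pre_single(1)[OF all ph])
    have it: "(next_pre U R (EE \<epsilon>) ^^ m) \<phi> = \<phi>" for m
    proof (induction m)
      case (Suc m) show ?case by (simp only: funpow.simps comp_apply Suc.IH np)
    qed simp
    have Th: "Theta U (EE \<epsilon>) \<phi> = {r}" using next_pre_single[OF all ph] by simp
    have rt: "return_time U R (EE \<epsilon>) r \<phi> = 1"
      unfolding return_time_def it Th by (rule Least_equality) auto
    have rm: "return_map U R (EE \<epsilon>) r \<phi> = \<phi>" by (simp add: return_map_def rt np)
    have sp: "splay_state U R (EE \<epsilon>) r \<phi>"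
      unfolding splay_state_def using ph Th rm it by (auto simp: \<phi>_def)
    have z: "\<delta> = 0" if "\<delta> $ r = 0" for \<delta> :: "real^'n"
      using that all by (metis vec_eq_iff zero_index)
    have st: "lin_stable U R (EE \<epsilon>) r \<phi>"
      unfolding lin_stable_def
    proof (intro exI conjI allI impI)
      have ev: "eventually (\<lambda>\<delta>. \<phi> = return_map U R (EE \<epsilon>) r (\<phi> + \<delta>)) (at 0 within {\<delta>::real^'n. \<delta> $ r = 0})"
        unfolding eventually_at_filter by (rule always_eventually) (use z in auto)
      show "((\<lambda>\<delta>. return_map U R (EE \<epsilon>) r (\<phi> + \<delta>)) has_derivative (\<lambda>h. 0)) (at 0 within {\<delta>. \<delta> $ r = 0})"
        by (rule has_derivative_transform_eventually[OF has_derivative_const ev]) (simp_all add: rm)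
      fix \<delta> :: "real^'n" assume "\<delta> $ r = 0"
      hence "\<delta> = 0" by (rule z)
      then have "((\<lambda>h::real^'n. 0::real^'n) ^^ k) \<delta> = 0" for k
        by (cases k) simp_all
      then show "(\<lambda>n. ((\<lambda>h::real^'n. 0::real^'n) ^^ n) \<delta>) \<longlonglongrightarrow> 0" by simp
    qed
    show ?thesis unfolding EE using sp st by blast
  qed
qed


end
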